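(* Let $A$ be a graded Poisson algebra with a conjugation $\rho$, let $*$ be a nondegenerate short star-product on $A$, $\mathbf{A}=(A,* )$ the corresponding quantization, $g$ and $T$ the corresponding automorphism and nondegenerate $g$-twisted trace, and regard $\rho$ as an antilinear map $\mathbf{A}\to\mathbf{A}$ (as $\mathbf{A}=A$ as filtered vector spaces). Then: (i) $*$ is conjugation-invariant if and only if $\rho$ is a conjugation on $\mathbf{A}$ (an antilinear algebra automorphism) which conjugates $T$, i.e., $T(\rho(\mathbf{a}))=\overline{T(\mathbf{a})}$ (hence $\rho$ commutes with $g$); (ii) in this situation, $*$ is Hermitian if and only if in addition $\rho^2=g$.
   Context: $A=\bigoplus_{d\ge0}A_d$ commutative graded with $A_0=\mathbb{C}$, $\dim A_d<\infty$, Poisson bracket of degree $-2$; $s=(-1)^d$. Conjugation on $A$: $\mathbb{C}$-antilinear degree-preserving Poisson automorphism; conjugation on a quantization: antilinear filtration-preserving algebra automorphism commuting with $s$. Star-product $a*b=\sum_kC_k(a,b)$ ($C_k$ degree $-2k$, $C_0$ product, $C_1(a,b)-C_1(b,a)=\{a,b\}$); short: $C_k(a,b)=0$ for $k>\min(\deg a,\deg b)$; nondegenerate: $\langle a,b\rangle=\mathrm{CT}(a*b)$ nondegenerate on each $A_i$. $T(\mathbf{a})=\mathrm{CT}(\mathbf{a})$ on $(A,* )$, and $g$ is the unique filtration-preserving automorphism with $T(\mathbf{a}*\mathbf{b})=T(\mathbf{b}*g(\mathbf{a}))$. Conjugation-invariant: $\rho(a*b)=\rho(a)*\rho(b)$.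 A conjugation-invariant short star-product is Hermitian if $\mathrm{CT}(a*b)=\mathrm{CT}(b*\rho^2(a))$. *)

theory Defs
  imports Complex_Main
begin

text \<open>The underlying complex vector space of A is a type 'a of class comm_ring_1
(its ring multiplication is the commutative product of A) together with an explicit complex
scalar multiplication sc.
The star-product is given by its coefficient maps C :: nat => 'a => 'a => 'a.\<close>

definition hdecomp :: "(nat \<Rightarrow> 'a::comm_ring_1 set) \<Rightarrow> 'a \<Rightarrow> (nat \<Rightarrow> 'a) \<Rightarrow> bool" where
  "hdecomp A x f \<longleftrightarrow> finite {d. f d \<noteq> 0} \<and> (\<forall>d. f d \<in> A d) \<and> x = (\<Sum>d\<in>{d. f d \<noteq> 0}. f d)"

definition comp :: "(nat \<Rightarrow> 'a::comm_ring_1 set) \<Rightarrow> 'a \<Rightarrow> nat \<Rightarrow> 'a" where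
  "comp A x = (THE f. hdecomp A x f)"

definition filt :: "(nat \<Rightarrow> 'a::comm_ring_1 set) \<Rightarrow> nat \<Rightarrow> 'a set" where
  "filt A n = {x. \<forall>d>n. comp A x d = 0}"

definition par :: "(nat \<Rightarrow> 'a::comm_ring_1 set) \<Rightarrow> 'a \<Rightarrow> 'a" where
  "par A x = (\<Sum>d\<in>{d. comp A x d \<noteq> 0}. (if even d then comp A x d else - comp A x d))"

definition CT :: "(complex \<Rightarrow> 'a \<Rightarrow> 'a) \<Rightarrow> (nat \<Rightarrow> 'a::comm_ring_1 set) \<Rightarrow> 'a \<Rightarrow> complex" where
  "CT sc A x = (THE c. comp A x 0 = sc c 1)"

definition bilinear_sc :: "(complex \<Rightarrow> 'a \<Rightarrow> 'a) \<Rightarrow> ('a::comm_ring_1 \<Rightarrow> 'a \<Rightarrow> 'a) \<Rightarrow> bool" where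
  "bilinear_sc sc m \<longleftrightarrow>
     (\<forall>x y z. m (x + y) z = m x z + m y z) \<and> (\<forall>x y z. m x (y + z) = m x y + m x z) \<and>
     (\<forall>c x y. m (sc c x) y = sc c (m x y)) \<and> (\<forall>c x y. m x (sc c y) = sc c (m x y))"

definition graded_poisson :: "(complex \<Rightarrow> 'a \<Rightarrow> 'a) \<Rightarrow> (nat \<Rightarrow> 'a::comm_ring_1 set) \<Rightarrow> ('a \<Rightarrow> 'a \<Rightarrow> 'a) \<Rightarrow> bool" where
  "graded_poisson sc A pb \<longleftrightarrow>
     vector_space sc \<and> (1::'a) \<noteq> 0 \<and>
     (\<forall>c x y. sc c (x * y) = sc c x * y) \<and>
     (\<forall>d. module.subspace sc (A d)) \<and>
     (\<forall>d. \<exists>B. finite B \<and> B \<subseteq> A d \<and> module.span sc B = A d) \<and>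
     (\<forall>x. \<exists>!f. hdecomp A x f) \<and>
     A 0 = range (\<lambda>c. sc c 1) \<and>
     (\<forall>i j x y. x \<in> A i \<longrightarrow> y \<in> A j \<longrightarrow> x * y \<in> A (i + j)) \<and>
     bilinear_sc sc pb \<and>
     (\<forall>x y. pb x y = - pb y x) \<and>
     (\<forall>x y z. pb x (pb y z) + pb y (pb z x) + pb z (pb x y) = 0) \<and>
     (\<forall>x y z. pb x (y * z) = pb x y * z + y * pb x z) \<and>
     (\<forall>i j x y. x \<in> A i \<longrightarrow> y \<in> A j \<longrightarrow>
        (if 2 \<le> i + j then pb x y \<in> A (i + j - 2) else pb x y = 0))"

definition antilinear :: "(complex \<Rightarrow> 'a \<Rightarrow> 'a) \<Rightarrow> ('a::comm_ring_1 \<Rightarrow> 'a) \<Rightarrow> bool" where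
  "antilinear sc r \<longleftrightarrow> (\<forall>x y. r (x + y) = r x + r y) \<and> (\<forall>c x. r (sc c x) = sc (cnj c) (r x))"

definition conjugation :: "(complex \<Rightarrow> 'a \<Rightarrow> 'a) \<Rightarrow> (nat \<Rightarrow> 'a::comm_ring_1 set) \<Rightarrow> ('a \<Rightarrow> 'a \<Rightarrow> 'a) \<Rightarrow> ('a \<Rightarrow> 'a) \<Rightarrow> bool" where
  "conjugation sc A pb r \<longleftrightarrow> antilinear sc r \<and> bij r \<and>
     (\<forall>x y. r (x * y) = r x * r y) \<and> (\<forall>d. r ` A d = A d) \<and>
     (\<forall>x y. r (pb x y) = pb (r x) (r y))"

text \<open>The star-product a*b = sum_k C_k(a,b) (a finite sum by degree reasons).\<close>
definition star :: "(nat \<Rightarrow> 'a \<Rightarrow> 'a \<Rightarrow> 'a::comm_ring_1) \<Rightarrow> 'a \<Rightarrow> 'a \<Rightarrow> 'a" where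
  "star C x y = (\<Sum>k\<in>{k. C k x y \<noteq> 0}. C k x y)"

definition star_product :: "(complex \<Rightarrow> 'a \<Rightarrow> 'a) \<Rightarrow> (nat \<Rightarrow> 'a::comm_ring_1 set) \<Rightarrow> ('a \<Rightarrow> 'a \<Rightarrow> 'a) \<Rightarrow> (nat \<Rightarrow> 'a \<Rightarrow> 'a \<Rightarrow> 'a) \<Rightarrow> bool" where
  "star_product sc A pb C \<longleftrightarrow>
     (\<forall>k. bilinear_sc sc (C k)) \<and>
     (\<forall>k i j x y. x \<in> A i \<longrightarrow> y \<in> A j \<longrightarrow>
        (if 2 * k \<le> i + j then C k x y \<in> A (i + j - 2 * k) else C k x y = 0)) \<and>
     (\<forall>x y. C 0 x y = x * y) \<and>
     (\<forall>x y. C 1 x y - C 1 y x = pb x y) \<and>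
     (\<forall>x y z. star C (star C x y) z = star C x (star C y z))"

definition short :: "(nat \<Rightarrow> 'a::comm_ring_1 set) \<Rightarrow> (nat \<Rightarrow> 'a \<Rightarrow> 'a \<Rightarrow> 'a) \<Rightarrow> bool" where
  "short A C \<longleftrightarrow> (\<forall>k i j x y. x \<in> A i \<longrightarrow> y \<in> A j \<longrightarrow> min i j < k \<longrightarrow> C k x y = 0)"

definition nondegenerate :: "(complex \<Rightarrow> 'a \<Rightarrow> 'a) \<Rightarrow> (nat \<Rightarrow> 'a::comm_ring_1 set) \<Rightarrow> (nat \<Rightarrow> 'a \<Rightarrow> 'a \<Rightarrow> 'a) \<Rightarrow> bool" where
  "nondegenerate sc A C \<longleftrightarrow>
     (\<forall>i. \<forall>x\<in>A i. (\<forall>y\<in>A i. CT sc A (star C x y) = 0) \<longrightarrow> x = 0) \<and>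
     (\<forall>i. \<forall>y\<in>A i. (\<forall>x\<in>A i. CT sc A (star C x y) = 0) \<longrightarrow> y = 0)"

text \<open>g: filtration-preserving (linear) automorphism of (A,*) with T(a*b) = T(b*g(a)), T = CT.\<close>
definition twist_aut :: "(complex \<Rightarrow> 'a \<Rightarrow> 'a) \<Rightarrow> (nat \<Rightarrow> 'a::comm_ring_1 set) \<Rightarrow> (nat \<Rightarrow> 'a \<Rightarrow> 'a \<Rightarrow> 'a) \<Rightarrow> ('a \<Rightarrow> 'a) \<Rightarrow> bool" where
  "twist_aut sc A C g \<longleftrightarrow> Vector_Spaces.linear sc sc g \<and> bij g \<and>
     (\<forall>x y. g (star C x y) = star C (g x) (g y)) \<and> (\<forall>n. g ` filt A n \<subseteq> filt A n) \<and>
     (\<forall>x y. CT sc A (star C x y) = CT sc A (star C y (g x)))"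

definition quant_conjugation :: "(complex \<Rightarrow> 'a \<Rightarrow> 'a) \<Rightarrow> (nat \<Rightarrow> 'a::comm_ring_1 set) \<Rightarrow> (nat \<Rightarrow> 'a \<Rightarrow> 'a \<Rightarrow> 'a) \<Rightarrow> ('a \<Rightarrow> 'a) \<Rightarrow> bool" where
  "quant_conjugation sc A C r \<longleftrightarrow> antilinear sc r \<and> bij r \<and>
     (\<forall>x y. r (star C x y) = star C (r x) (r y)) \<and> (\<forall>n. r ` filt A n \<subseteq> filt A n) \<and>
     (\<forall>x. r (par A x) = par A (r x))"

definition conj_invariant :: "(nat \<Rightarrow> 'a \<Rightarrow> 'a \<Rightarrow> 'a::comm_ring_1) \<Rightarrow> ('a \<Rightarrow> 'a) \<Rightarrow> bool" where
  "conj_invariant C r \<longleftrightarrow> (\<forall>x y. r (star C x y) = star C (r x) (r y))"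

definition hermitian :: "(complex \<Rightarrow> 'a \<Rightarrow> 'a) \<Rightarrow> (nat \<Rightarrow> 'a::comm_ring_1 set) \<Rightarrow> (nat \<Rightarrow> 'a \<Rightarrow> 'a \<Rightarrow> 'a) \<Rightarrow> ('a \<Rightarrow> 'a) \<Rightarrow> bool" where
  "hermitian sc A C r \<longleftrightarrow> conj_invariant C r \<and> short A C \<and>
     (\<forall>x y. CT sc A (star C x y) = CT sc A (star C y (r (r x))))"

end

theory Submission
  imports Defs
begin

locale L =
  fixes sc :: "complex \<Rightarrow> 'a::comm_ring_1 \<Rightarrow> 'a"
    and A :: "nat \<Rightarrow> 'a set"
    and pb :: "'a \<Rightarrow> 'a \<Rightarrow> 'a"
    and C :: "nat \<Rightarrow> 'a \<Rightarrow> 'a \<Rightarrow> 'a"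
  assumes gp: "graded_poisson sc A pb"
    and sp: "star_product sc A pb C"
    and sh: "short A C"
    and nd: "nondegenerate sc A C"
begin

lemma vs: "vector_space sc" using gp by (simp add: graded_poisson_def)
lemma msc: "module sc" using vs by (simp add: vector_space_def module_def)
lemma one_nz: "(1::'a) \<noteq> 0" using gp by (simp add: graded_poisson_def)
lemma subA: "module.subspace sc (A d)" using gp by (simp add: graded_poisson_def)
lemma zeroA: "0 \<in> A d" using module.subspace_0[OF msc subA] .
lemma addA: "x \<in> A d \<Longrightarrow> y \<in> A d \<Longrightarrow> x + y \<in> A d" using module.subspace_add[OF msc subA] by blast
lemma A0: "A 0 = range (\<lambda>c. sc c 1)" using gp by (simp add: graded_poisson_def)
lemma exu: "\<exists>!f. hdecomp A x f" using gp by (simp add: graded_poisson_def)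

lemma hd_comp: "hdecomp A x (comp A x)"
  unfolding comp_def using exu[of x] by (rule theI')

lemma comp_unique: "hdecomp A x f \<Longrightarrow> comp A x = f"
  using hd_comp[of x] exu[of x] by blast

lemma compA: "comp A x d \<in> A d" using hd_comp[of x] by (simp add: hdecomp_def)
lemma fin_supp: "finite {d. comp A x d \<noteq> 0}" using hd_comp[of x] by (simp add: hdecomp_def)
lemma x_sum: "x = (\<Sum>d\<in>{d. comp A x d \<noteq> 0}. comp A x d)" using hd_comp[of x] by (simp add: hdecomp_def)

lemma x_sum_S: assumes "finite S" "{d. comp A x d \<noteq> 0} \<subseteq> S"
  shows "x = (\<Sum>d\<in>S. comp A x d)"
proof -
  have "(\<Sum>d\<in>{d. comp A x d \<noteq> 0}. comp A x d) = (\<Sum>d\<in>S. comp A x d)"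
    by (rule sum.mono_neutral_left) (use assms in auto)
  then show ?thesis using x_sum[of x] by simp
qed

lemma comp_hom: assumes "x \<in> A j" shows "comp A x = (\<lambda>d. if d = j then x else 0)"
proof (rule comp_unique)
  have s: "{d. (if d = j then x else 0) \<noteq> 0} = (if x = 0 then {} else {j})" by auto
  show "hdecomp A x (\<lambda>d. if d = j then x else 0)"
    unfolding hdecomp_def s using assms zeroA by auto
qed

lemma comp_zero_in: assumes "x \<in> A j" "d \<noteq> j" shows "comp A x d = 0"
  using comp_hom[OF assms(1)] assms(2) by simp

lemma comp_add: "comp A (x + y) = (\<lambda>d. comp A x d + comp A y d)"
proof (rule comp_unique)
  let ?S = "{d. comp A x d \<noteq> 0} \<union> {d. comp A y d \<noteq> 0}"
  have fS: "finite ?S" using fin_supp by auto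
  have f1: "finite {d. comp A x d + comp A y d \<noteq> 0}"
    by (rule finite_subset[OF _ fS]) auto
  have "(\<Sum>d\<in>{d. comp A x d + comp A y d \<noteq> 0}. comp A x d + comp A y d)
      = (\<Sum>d\<in>?S. comp A x d + comp A y d)"
    by (rule sum.mono_neutral_left) (use fS in auto)
  also have "\<dots> = (\<Sum>d\<in>?S. comp A x d) + (\<Sum>d\<in>?S. comp A y d)" by (simp add: sum.distrib)
  also have "\<dots> = x + y" using x_sum_S[OF fS, of x] x_sum_S[OF fS, of y] by auto
  finally show "hdecomp A (x + y) (\<lambda>d. comp A x d + comp A y d)"
    unfolding hdecomp_def using f1 compA addA by auto
qed

lemma sc_inj: "sc c 1 = sc c' 1 \<Longrightarrow> c = c'"
  using vector_space.scale_cancel_right[OF vs] one_nz by blast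

lemma CT_eq: assumes "comp A x 0 = sc c 1" shows "CT sc A x = c"
  unfolding CT_def by (rule the_equality) (use assms sc_inj in auto)

lemma CT_ex: "\<exists>c. comp A x 0 = sc c 1"
  using compA[of x 0] A0 by auto

lemma CT_spec: "comp A x 0 = sc (CT sc A x) 1"
  using CT_ex[of x] CT_eq by metis

lemma sc_add: "sc a x + sc b x = sc (a + b) x"
  using module.scale_left_distrib[OF msc] by simp

lemma CT_add: "CT sc A (x + y) = CT sc A x + CT sc A y"
  apply (rule CT_eq)
  using CT_spec[of x] CT_spec[of y] by (simp add: comp_add sc_add)

lemma CT_0: "CT sc A 0 = 0"
  using CT_add[of 0 0] by simp

lemma CT_pos: assumes "x \<in> A m" "m > 0" shows "CT sc A x = 0"
proof -
  have "comp A x 0 = 0" using comp_zero_in[OF assms(1)] assms(2) by simp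
  also have "0 = sc 0 1" using module.scale_zero_left[OF msc] by simp
  finally show ?thesis by (rule CT_eq)
qed

lemma Cbil: "bilinear_sc sc (C k)" using sp by (simp add: star_product_def)
lemma C_add2: "C k y (u + v) = C k y u + C k y v" using Cbil[of k] by (simp add: bilinear_sc_def)
lemma C_zero2: "C k y 0 = 0" using C_add2[of k y 0 0] by simp
lemma C_deg: "x \<in> A i \<Longrightarrow> y \<in> A j \<Longrightarrow>
        (if 2 * k \<le> i + j then C k x y \<in> A (i + j - 2 * k) else C k x y = 0)"
  using sp by (simp add: star_product_def)

lemma C_sum2: "C k y (sum f S) = (\<Sum>e\<in>S. C k y (f e))"
  using sum_comp_morphism[of "C k y" f S, OF C_zero2 C_add2] by (simp add: o_def)

lemma C_big: assumes "y \<in> A j" "j < k" shows "C k y z = 0"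
proof -
  have "C k y z = (\<Sum>e\<in>{d. comp A z d \<noteq> 0}. C k y (comp A z e))"
    using x_sum[of z] C_sum2 by metis
  also have "\<dots> = 0"
    apply (rule sum.neutral) using sh assms compA unfolding short_def
    by (metis min_less_iff_disj)
  finally show ?thesis .
qed

lemma star_hom: assumes "y \<in> A j" shows "star C y z = (\<Sum>k\<in>{..j}. C k y z)"
  unfolding star_def
  apply (rule sum.mono_neutral_left)
  using C_big[OF assms] by (auto simp: not_le[symmetric])

lemma star_add2: assumes "y \<in> A j" shows "star C y (u + v) = star C y u + star C y v"
  using star_hom[OF assms] by (simp add: C_add2 sum.distrib)

lemma CT_sum: "CT sc A (sum f S) = (\<Sum>e\<in>S. CT sc A (f e))"
  using sum_comp_morphism[of "CT sc A" f S, OF CT_0 CT_add] by (simp add: o_def)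

lemma CT_star_off: assumes "y \<in> A j" "w \<in> A e" "e \<noteq> j"
  shows "CT sc A (star C y w) = 0"
proof -
  have "CT sc A (star C y w) = (\<Sum>k\<in>{..j}. CT sc A (C k y w))"
    using star_hom[OF assms(1)] CT_sum by simp
  also have "\<dots> = 0"
  proof (rule sum.neutral, intro ballI)
    fix k assume "k \<in> {..j}"
    show "CT sc A (C k y w) = 0"
    proof (cases "min j e < k")
      case True
      then have "C k y w = 0" using sh assms unfolding short_def by blast
      then show ?thesis by (simp add: CT_0)
    next
      case False
      then have le: "2 * k \<le> j + e" by simp
      then have "C k y w \<in> A (j + e - 2 * k)" using C_deg[OF assms(1,2), of k] by simp
      moreover have "j + e - 2 * k > 0" using False assms(3) by auto
      ultimately show ?thesis by (rule CT_pos)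
    qed
  qed
  finally show ?thesis .
qed

lemma key: assumes "\<And>j y. y \<in> A j \<Longrightarrow> CT sc A (star C y z) = 0" shows "z = 0"
proof (rule ccontr)
  assume "z \<noteq> 0"
  then obtain j where j: "comp A z j \<noteq> 0" using x_sum[of z]
    by (metis (mono_tags, lifting) Collect_empty_eq sum.empty)
  let ?S = "{d. comp A z d \<noteq> 0}"
  have "\<forall>x\<in>A j. CT sc A (star C x (comp A z j)) = 0"
  proof
    fix x assume x: "x \<in> A j"
    have h0: "CT sc A (star C x 0) = 0" using star_hom[OF x] by (simp add: C_zero2 CT_0)
    have ha: "\<And>u v. CT sc A (star C x (u + v)) = CT sc A (star C x u) + CT sc A (star C x v)"
      using star_add2[OF x] CT_add by simp
    have "CT sc A (star C x z) = CT sc A (star C x (\<Sum>e\<in>?S. comp A z e))"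
      using x_sum[of z] by simp
    also have "\<dots> = (\<Sum>e\<in>?S. CT sc A (star C x (comp A z e)))"
      using sum_comp_morphism[of "\<lambda>w. CT sc A (star C x w)" "comp A z" ?S, OF h0 ha]
      by (simp add: o_def)
    also have "\<dots> = CT sc A (star C x (comp A z j)) + (\<Sum>e\<in>?S-{j}. CT sc A (star C x (comp A z e)))"
      using j fin_supp[of z] by (simp add: sum.remove)
    also have "(\<Sum>e\<in>?S-{j}. CT sc A (star C x (comp A z e))) = 0"
      by (rule sum.neutral) (use x compA CT_star_off in blast)
    finally show "CT sc A (star C x (comp A z j)) = 0" using assms[OF x] by simp
  qed
  then have "comp A z j = 0" using nd compA[of z j] unfolding nondegenerate_def by blast
  then show False using j by simp
qed

lemma key2: assumes "\<And>y. CT sc A (star C y u) = CT sc A (star C y v)" shows "u = v"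
proof -
  have "u - v = 0"
  proof (rule key)
    fix j y assume y: "y \<in> A j"
    have "CT sc A (star C y u) = CT sc A (star C y (v + (u - v)))" by simp
    also have "\<dots> = CT sc A (star C y v + star C y (u - v))"
      by (simp only: star_add2[OF y])
    also have "\<dots> = CT sc A (star C y v) + CT sc A (star C y (u - v))"
      by (rule CT_add)
    finally show "CT sc A (star C y (u - v)) = 0" using assms[of y] by simp
  qed
  then show ?thesis by simp
qed

context
  fixes rho assumes cj: "conjugation sc A pb rho"
begin

lemma r_add: "rho (x + y) = rho x + rho y" using cj by (simp add: conjugation_def antilinear_def)
lemma r_0: "rho 0 = 0" using r_add[of 0 0] by simp
lemma r_neg: "rho (- x) = - rho x"
proof -
  have "rho x + rho (- x) = 0" using r_add[of x "- x"] r_0 by simp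
  then show ?thesis by (rule minus_unique[symmetric])
qed
lemma r_inj: "inj rho" using cj by (simp add: conjugation_def bij_def)
lemma r_sc: "rho (sc c x) = sc (cnj c) (rho x)" using cj by (simp add: conjugation_def antilinear_def)
lemma r_A: "x \<in> A d \<Longrightarrow> rho x \<in> A d" using cj unfolding conjugation_def by blast
lemma r_1: "rho 1 = 1"
proof -
  have b: "bij rho" using cj by (simp add: conjugation_def)
  obtain u where u: "rho u = 1" using b by (metis bij_pointE)
  have "rho 1 = rho 1 * rho u" using u by simp
  also have "\<dots> = rho (1 * u)" using cj unfolding conjugation_def by metis
  finally show ?thesis using u by simp
qed
lemma r_sum: "rho (sum f S) = (\<Sum>e\<in>S. rho (f e))"
  using sum_comp_morphism[of rho f S, OF r_0 r_add] by (simp add: o_def)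

lemma r_nz: "(rho x \<noteq> 0) = (x \<noteq> 0)"
  using r_inj r_0 by (metis injD)

lemma comp_r: "comp A (rho x) = (\<lambda>d. rho (comp A x d))"
proof (rule comp_unique)
  have s: "{d. rho (comp A x d) \<noteq> 0} = {d. comp A x d \<noteq> 0}" using r_nz by simp
  show "hdecomp A (rho x) (\<lambda>d. rho (comp A x d))"
    unfolding hdecomp_def s
  proof (intro conjI allI)
    show "finite {d. comp A x d \<noteq> 0}" by (rule fin_supp)
    show "rho (comp A x d) \<in> A d" for d using r_A compA by blast
    have e: "rho (\<Sum>d\<in>{d. comp A x d \<noteq> 0}. comp A x d) = (\<Sum>d\<in>{d. comp A x d \<noteq> 0}. rho (comp A x d))"
      by (rule r_sum)
    show "rho x = (\<Sum>d\<in>{d. comp A x d \<noteq> 0}. rho (comp A x d))"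
      using e by (simp only: x_sum[of x, symmetric])
  qed
qed

lemma CT_r: "CT sc A (rho x) = cnj (CT sc A x)"
  apply (rule CT_eq) using CT_spec[of x] by (simp add: comp_r r_sc r_1)

lemma filt_r: "rho ` filt A n \<subseteq> filt A n"
  unfolding filt_def using comp_r r_0 by auto

lemma par_r: "rho (par A x) = par A (rho x)"
proof -
  have s: "{d. comp A (rho x) d \<noteq> 0} = {d. comp A x d \<noteq> 0}" using r_nz comp_r by simp
  show ?thesis unfolding par_def s r_sum by (intro sum.cong) (auto simp: comp_r r_neg)
qed

end
end

theorem lemma3p23:
  fixes sc :: "complex \<Rightarrow> 'a::comm_ring_1 \<Rightarrow> 'a"
    and A :: "nat \<Rightarrow> 'a set"
    and pb :: "'a \<Rightarrow> 'a \<Rightarrow> 'a"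
    and rho :: "'a \<Rightarrow> 'a"
    and C :: "nat \<Rightarrow> 'a \<Rightarrow> 'a \<Rightarrow> 'a"
    and g :: "'a \<Rightarrow> 'a"
  assumes "graded_poisson sc A pb"
    and "conjugation sc A pb rho"
    and "star_product sc A pb C"
    and "short A C"
    and "nondegenerate sc A C"
    and "twist_aut sc A C g"
  shows "(conj_invariant C rho \<longleftrightarrow>
            quant_conjugation sc A C rho \<and> (\<forall>x. CT sc A (rho x) = cnj (CT sc A x)))
       \<and> (conj_invariant C rho \<longrightarrow> rho \<circ> g = g \<circ> rho)
       \<and> (conj_invariant C rho \<longrightarrow> (hermitian sc A C rho \<longleftrightarrow> rho \<circ> rho = g))"
proof -
  interpret L sc A pb C using assms by (simp add: L_def)
  note cj = assms(2)
  have tw: "\<And>x y. CT sc A (star C x y) = CT sc A (star C y (g x))"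
    using assms(6) by (simp add: twist_aut_def)
  have surj: "surj rho" using cj by (simp add: conjugation_def bij_def)
  have P1: "conj_invariant C rho \<longleftrightarrow>
            quant_conjugation sc A C rho \<and> (\<forall>x. CT sc A (rho x) = cnj (CT sc A x))"
  proof
    assume ci: "conj_invariant C rho"
    have al: "antilinear sc rho" and bj: "bij rho" using cj unfolding conjugation_def by simp_all
    have st: "\<forall>x y. rho (star C x y) = star C (rho x) (rho y)" using ci unfolding conj_invariant_def .
    have "quant_conjugation sc A C rho" unfolding quant_conjugation_def
      using al bj st filt_r[OF cj] par_r[OF cj] by simp
    then show "quant_conjugation sc A C rho \<and> (\<forall>x. CT sc A (rho x) = cnj (CT sc A x))"
      using CT_r[OF cj] by simp
  next
    assume "quant_conjugation sc A C rho \<and> (\<forall>x. CT sc A (rho x) = cnj (CT sc A x))"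
    then show "conj_invariant C rho" unfolding quant_conjugation_def conj_invariant_def by simp
  qed
  have P2: "rho \<circ> g = g \<circ> rho" if ci: "conj_invariant C rho"
  proof
    fix a
    have st: "\<And>x y. rho (star C x y) = star C (rho x) (rho y)" using ci by (simp add: conj_invariant_def)
    show "(rho \<circ> g) a = (g \<circ> rho) a"
    proof (simp, rule sym, rule key2)
      fix y
      obtain b where b: "y = rho b" using surj by (metis surjD)
      have "CT sc A (star C y (g (rho a))) = CT sc A (star C (rho a) (rho b))"
        using tw b by simp
      also have "\<dots> = cnj (CT sc A (star C a b))" using st CT_r[OF cj] by metis
      also have "\<dots> = cnj (CT sc A (star C b (g a)))" using tw by simp
      also have "\<dots> = CT sc A (star C y (rho (g a)))" using st CT_r[OF cj] b by metis
      finally show "CT sc A (star C y (g (rho a))) = CT sc A (star C y (rho (g a)))" .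
    qed
  qed
  have P3: "hermitian sc A C rho \<longleftrightarrow> rho \<circ> rho = g" if ci: "conj_invariant C rho"
  proof
    assume h: "hermitian sc A C rho"
    show "rho \<circ> rho = g"
    proof
      fix x show "(rho \<circ> rho) x = g x"
        apply simp apply (rule key2)
        using h tw unfolding hermitian_def by metis
    qed
  next
    assume "rho \<circ> rho = g"
    then show "hermitian sc A C rho"
      unfolding hermitian_def using ci assms(4) tw by (metis comp_apply)
  qed
  show ?thesis using P1 P2 P3 by blast
qed

end
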